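(* Let $\mathbf{Y}=\boldsymbol{\xi}+\boldsymbol{\omega}(\boldsymbol{\delta}U+\mathbf{Z})\sim\mathcal{MMNE}_p(\boldsymbol{\xi},\mathbf{\Omega},\boldsymbol{\delta})$ with $\boldsymbol{\delta}\neq\mathbf{0}$, where $U$ is standard exponential. Put $\mathbf{\Sigma}_{\mathbf{Y}}=\mathbf{\Omega}-\boldsymbol{\omega}\boldsymbol{\delta}\boldsymbol{\delta}^\top\boldsymbol{\omega}$, $\eta=\sqrt{\boldsymbol{\delta}^\top\boldsymbol{\omega}\mathbf{\Sigma}_{\mathbf{Y}}^{-1}\boldsymbol{\omega}\boldsymbol{\delta}}$ and, for $\mathbf{y}\in\mathbb{R}^p$, $A=A(\mathbf{y})=\eta^{-1}[\boldsymbol{\delta}^\top\boldsymbol{\omega}\mathbf{\Sigma}_{\mathbf{Y}}^{-1}(\mathbf{y}-\boldsymbol{\xi})-1]$. Then the conditional distribution of $U$ given $\mathbf{Y}=\mathbf{y}$ is $\mathcal{TN}(\eta^{-1}A,\eta^{-2},(0,\infty))$. Furthermore, $$\mathrm{E}[U\mid\mathbf{Y}=\mathbf{y}]=\eta^{-1}\Big(A+\frac{\phi(A)}{\Phi(A)}\Big),$$ and for $k\in\{2,3,\dots\}$, $$\mathrm{E}[U^k\mid\mathbf{Y}=\mathbf{y}]=A\eta^{-1}\,\mathrm{E}[U^{k-1}\mid\mathbf{Y}=\mathbf{y}]+(k-1)\eta^{-2}\,\mathrm{E}[U^{k-2}\mid\mathbf{Y}=\mathbf{y}].$$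
   Context: Let $\boldsymbol{\xi}\in\mathbb{R}^p$, $\mathbf{\Omega}$ a $p\times p$ symmetric positive definite matrix, $\boldsymbol{\omega}=\mathrm{diag}(\mathbf{\Omega}_{11}^{1/2},\dots,\mathbf{\Omega}_{pp}^{1/2})$, $\overline{\mathbf{\Omega}}=\boldsymbol{\omega}^{-1}\mathbf{\Omega}\boldsymbol{\omega}^{-1}$, $\boldsymbol{\delta}\in\mathbb{R}^p$ with $\overline{\mathbf{\Omega}}-\boldsymbol{\delta}\boldsymbol{\delta}^\top$ positive definite. $\mathcal{MMNE}_p(\boldsymbol{\xi},\mathbf{\Omega},\boldsymbol{\delta})$ denotes the law of $\boldsymbol{\xi}+\boldsymbol{\omega}(\boldsymbol{\delta}U+\mathbf{Z})$ where $U$ has density $e^{-u}$, $u>0$, and $\mathbf{Z}\sim\mathcal{N}_p(\mathbf{0},\overline{\mathbf{\Omega}}-\boldsymbol{\delta}\boldsymbol{\delta}^\top)$ is independent of $U$. $\mathcal{TN}(a,b,(0,\infty))$ is the normal distribution with mean $a$ and variance $b$ truncated to $(0,\infty)$. $\phi$ and $\Phi$ are the standard normal density and CDF. *)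

theory Defs
  imports "HOL-Probability.Probability"
begin

definition std_normal_cdf :: "real \<Rightarrow> real" where
  "std_normal_cdf x = measure (density lborel std_normal_density) {..x}"

definition mvn_density :: "real^'p \<Rightarrow> real^'p^'p \<Rightarrow> real^'p \<Rightarrow> real" where
  "mvn_density \<mu> S x =
     exp (- ((x - \<mu>) \<bullet> (matrix_inv S *v (x - \<mu>))) / 2) /
     (sqrt ((2 * pi) ^ CARD('p) * det S))"

text \<open>Truncated normal \<open>TN(a, b, (0,\<infinity>))\<close>: mean a, variance b, truncated to \<open>(0,\<infinity>)\<close>.\<close>
definition trunc_normal :: "real \<Rightarrow> real \<Rightarrow> real measure" where
  "trunc_normal a b = density lborel (\<lambda>u. ennreal
     (indicator {0<..} u * normal_density a (sqrt b) u / (1 - std_normal_cdf (- a / sqrt b))))"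

definition pos_def_mat :: "real^'p^'p \<Rightarrow> bool" where
  "pos_def_mat S \<longleftrightarrow> transpose S = S \<and> (\<forall>x. x \<noteq> 0 \<longrightarrow> x \<bullet> (S *v x) > 0)"

definition omega_diag :: "real^'p^'p \<Rightarrow> real^'p^'p" where
  "omega_diag \<Omega> = (\<chi> i j. if i = j then sqrt (\<Omega> $ i $ i) else 0)"

definition corr_mat :: "real^'p^'p \<Rightarrow> real^'p^'p" where
  "corr_mat \<Omega> = matrix_inv (omega_diag \<Omega>) ** \<Omega> ** matrix_inv (omega_diag \<Omega>)"

definition outer :: "real^'p \<Rightarrow> real^'p \<Rightarrow> real^'p^'p" where
  "outer a b = (\<chi> i j. a $ i * b $ j)"

end

theory Submission
  imports Defs "HOL-Real_Asymp.Real_Asymp"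
begin
lemma normal_density_std:
  assumes "0 < (s::real)"
  shows "normal_density m s x = std_normal_density ((x - m) / s) / s"
  using assms by (simp add: normal_density_def real_sqrt_mult power_divide field_simps)

lemma prob_space_std: "prob_space (density lborel std_normal_density)"
  by (rule prob_space_normal_density) simp

lemma Phi_emeasure: "emeasure (density lborel std_normal_density) {..x} = ennreal (std_normal_cdf x)"
proof -
  interpret prob_space "density lborel std_normal_density" by (rule prob_space_std)
  show ?thesis unfolding std_normal_cdf_def by (simp add: emeasure_eq_measure)
qed

lemma Phi_tail: "emeasure (density lborel std_normal_density) {x<..} = ennreal (1 - std_normal_cdf x)"
proof -
  interpret prob_space "density lborel std_normal_density" by (rule prob_space_std)
  have "measure (density lborel std_normal_density) (space (density lborel std_normal_density) - {..x})
     = 1 - measure (density lborel std_normal_density) {..x}"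
    by (rule prob_compl) simp
  moreover have "space (density lborel std_normal_density) - {..x} = {x<..}" by auto
  ultimately show ?thesis unfolding std_normal_cdf_def by (simp add: emeasure_eq_measure)
qed

lemma nn_std_tail:
  "(\<integral>\<^sup>+x. ennreal (indicator {a<..} x * std_normal_density x) \<partial>lborel) = ennreal (1 - std_normal_cdf a)"
proof -
  have "(\<integral>\<^sup>+x. ennreal (indicator {a<..} x * std_normal_density x) \<partial>lborel)
       = (\<integral>\<^sup>+x. ennreal (std_normal_density x) * indicator {a<..} x \<partial>lborel)"
    by (intro nn_integral_cong) (auto split: split_indicator)
  also have "\<dots> = emeasure (density lborel std_normal_density) {a<..}"
    by (subst emeasure_density) auto
  finally show ?thesis using Phi_tail by simp
qed

lemma nn_std_le:
  "(\<integral>\<^sup>+x. ennreal (indicator {..a} x * std_normal_density x) \<partial>lborel) = ennreal (std_normal_cdf a)"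
proof -
  have "(\<integral>\<^sup>+x. ennreal (indicator {..a} x * std_normal_density x) \<partial>lborel)
       = (\<integral>\<^sup>+x. ennreal (std_normal_density x) * indicator {..a} x \<partial>lborel)"
    by (intro nn_integral_cong) (auto split: split_indicator)
  also have "\<dots> = emeasure (density lborel std_normal_density) {..a}"
    by (subst emeasure_density) auto
  finally show ?thesis using Phi_emeasure by simp
qed

lemma Phi_sym: "1 - std_normal_cdf (- a) = std_normal_cdf a"
proof -
  have "ennreal (1 - std_normal_cdf (- a)) = (\<integral>\<^sup>+x. ennreal (indicator {-a<..} x * std_normal_density x) \<partial>lborel)"
    by (rule nn_std_tail[symmetric])
  also have "\<dots> = ennreal \<bar>-1\<bar> * (\<integral>\<^sup>+x. ennreal (indicator {-a<..} (0 + (-1) * x) * std_normal_density (0 + (-1) * x)) \<partial>lborel)"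
    by (rule nn_integral_real_affine) auto
  also have "\<dots> = (\<integral>\<^sup>+x. ennreal (indicator {..a} x * std_normal_density x) \<partial>lborel)"
  proof -
    have "(\<integral>\<^sup>+x. ennreal (indicator {-a<..} (0 + (-1) * x) * std_normal_density (0 + (-1) * x)) \<partial>lborel)
        = (\<integral>\<^sup>+x. ennreal (indicator {..a} x * std_normal_density x) \<partial>lborel)"
      by (intro nn_integral_cong_AE AE_I[where N="{a}"]) (auto simp: std_normal_density_def split: split_indicator)
    then show ?thesis by simp
  qed
  also have "\<dots> = ennreal (std_normal_cdf a)" by (rule nn_std_le)
  finally have "ennreal (1 - std_normal_cdf (- a)) = ennreal (std_normal_cdf a)" .
  moreover have "0 \<le> std_normal_cdf a" unfolding std_normal_cdf_def by simp
  moreover have "std_normal_cdf (-a) \<le> 1"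
  proof -
    interpret prob_space "density lborel std_normal_density" by (rule prob_space_std)
    show ?thesis unfolding std_normal_cdf_def by simp
  qed
  ultimately show ?thesis by simp
qed

lemma Phi_tail_pos: "0 < 1 - std_normal_cdf a"
proof (rule ccontr)
  assume "\<not> 0 < 1 - std_normal_cdf a"
  then have "(\<integral>\<^sup>+x. ennreal (indicator {a<..} x * std_normal_density x) \<partial>lborel) = 0"
    by (simp add: nn_std_tail ennreal_eq_0_iff)
  then have "AE x in lborel. ennreal (indicator {a<..} x * std_normal_density x) = 0"
    by (subst (asm) nn_integral_0_iff_AE) auto
  then have "AE x in lborel. x \<notin> {a<..}"
    by eventually_elim (auto simp: std_normal_density_def split: split_indicator)
  then have "emeasure lborel {a<..} = 0"
    by (subst (asm) AE_iff_measurable[where N="{a<..}"]) auto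
  moreover have "emeasure lborel {a<..a+1} = 1" by simp
  moreover have "emeasure lborel {a<..a+1} \<le> emeasure lborel {a<..}"
    by (intro emeasure_mono) auto
  ultimately show False by simp
qed

lemma nn_tail_normal:
  assumes s: "0 < s"
  shows "(\<integral>\<^sup>+u. ennreal (indicator {0<..} u * normal_density m s u) \<partial>lborel) = ennreal (1 - std_normal_cdf (- m / s))"
proof -
  have "(\<integral>\<^sup>+u. ennreal (indicator {0<..} u * normal_density m s u) \<partial>lborel)
      = ennreal \<bar>s\<bar> * (\<integral>\<^sup>+x. ennreal (indicator {0<..} (m + s * x) * normal_density m s (m + s * x)) \<partial>lborel)"
    using s by (intro nn_integral_real_affine) auto
  also have "\<dots> = (\<integral>\<^sup>+x. ennreal s * ennreal (indicator {0<..} (m + s * x) * normal_density m s (m + s * x)) \<partial>lborel)"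
    using s by (subst nn_integral_cmult) auto
  also have "\<dots> = (\<integral>\<^sup>+x. ennreal (indicator {- m / s<..} x * std_normal_density x) \<partial>lborel)"
  proof (intro nn_integral_cong)
    fix x
    have e: "(0 < m + s * x) = (- m / s < x)" using s by (auto simp: field_simps)
    show "ennreal s * ennreal (indicator {0<..} (m + s * x) * normal_density m s (m + s * x))
        = ennreal (indicator {- m / s<..} x * std_normal_density x)"
      using s by (simp add: normal_density_std[OF s] e ennreal_mult''[symmetric] split: split_indicator)
  qed
  also have "\<dots> = ennreal (1 - std_normal_cdf (- m / s))" by (rule nn_std_tail)
  finally show ?thesis .
qed

lemma integrable_poly_normal:
  assumes s: "0 < s"
  shows "integrable lborel (\<lambda>u. u ^ n * normal_density m s u)"
proof -
  have eq: "(\<lambda>u. u ^ n * normal_density m s u)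
     = (\<lambda>u. \<Sum>k\<le>n. (of_nat (n choose k) * m ^ (n - k)) * (normal_density m s u * (u - m) ^ k))"
  proof
    fix u :: real
    have "u ^ n = ((u - m) + m) ^ n" by simp
    also have "\<dots> = (\<Sum>k\<le>n. of_nat (n choose k) * (u - m) ^ k * m ^ (n - k))" by (rule binomial_ring)
    finally show "u ^ n * normal_density m s u
       = (\<Sum>k\<le>n. (of_nat (n choose k) * m ^ (n - k)) * (normal_density m s u * (u - m) ^ k))"
      by (simp add: sum_distrib_right sum_distrib_left ac_simps)
  qed
  show ?thesis unfolding eq
    apply (rule Bochner_Integration.integrable_sum)
    apply (rule Bochner_Integration.integrable_mult_right)
    apply (rule integrable_normal_moment[OF s])
    done
qed

lemma integrable_poly_normal_ind:
  assumes s: "0 < s" and that: "A \<in> sets borel"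
  shows "integrable lborel (\<lambda>u. indicator A u * u ^ n * normal_density m s u)"
proof -
  have "integrable lborel (\<lambda>u. indicator A u *\<^sub>R (u ^ n * normal_density m s u))"
    using that by (intro integrable_mult_indicator integrable_poly_normal s) auto
  then show ?thesis by (simp add: mult.assoc)
qed

definition Jm :: "real \<Rightarrow> real \<Rightarrow> nat \<Rightarrow> real" where
  "Jm m s n = (\<integral>u. indicator {0<..} u * u ^ n * normal_density m s u \<partial>lborel)"

lemma aux_deriv_eq: "(s::real) \<noteq> 0 \<Longrightarrow> E * (s\<^sup>2 * (2*u - 2*m)) * c * w / (2 * s^4) = w * (u-m) * (c*E)/s\<^sup>2"
  by (simp add: field_simps power2_eq_square power4_eq_xxxx)

lemma deriv_poly_gauss: assumes s: "s \<noteq> 0"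
shows "((\<lambda>u. u ^ n * (c * exp (-(u - m)\<^sup>2/ (2 * s\<^sup>2)))) has_real_derivative
     (real n * u ^ (n - 1) * (c * exp (-(u - m)\<^sup>2/ (2 * s\<^sup>2)))
      - u ^ n * (u - m) / s\<^sup>2 * (c * exp (-(u - m)\<^sup>2/ (2 * s\<^sup>2))))) (at u)"
  using s apply (auto intro!: derivative_eq_intros)
  apply (simp add: aux_deriv_eq[OF s])
  done

lemma deriv_poly_normal:
  assumes s: "0 < s"
  shows "((\<lambda>u. u ^ n * normal_density m s u) has_real_derivative
     (real n * u ^ (n - 1) * normal_density m s u - u ^ n * (u - m) / s\<^sup>2 * normal_density m s u)) (at u)"
  unfolding normal_density_def by (rule deriv_poly_gauss) (use s in simp)

lemma cont_normal: "0 < s \<Longrightarrow> continuous_on A (normal_density m s)"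
  unfolding normal_density_def by (intro continuous_on_mult continuous_on_const continuous_on_exp continuous_on_divide continuous_on_minus continuous_on_power continuous_on_diff continuous_on_id) auto

lemma cont_poly_normal: "0 < s \<Longrightarrow> continuous_on A (\<lambda>u::real. real n * u ^ (n - 1) * normal_density m s u - u ^ n * (u - m) / s\<^sup>2 * normal_density m s u)"
  by (intro continuous_on_diff continuous_on_mult continuous_on_divide continuous_on_const continuous_on_power continuous_on_id cont_normal) auto

lemma ftc_poly_normal:
  assumes s: "0 < s"
  shows "(\<integral>u. indicator {0..} u * (real n * u ^ (n - 1) * normal_density m s u - u ^ n * (u - m) / s\<^sup>2 * normal_density m s u) \<partial>lborel)
     = - (0 ^ n * normal_density m s 0)"
proof -
  define f where "f = (\<lambda>u. real n * u ^ (n - 1) * normal_density m s u - u ^ n * (u - m) / s\<^sup>2 * normal_density m s u)"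
  define F where "F = (\<lambda>u. u ^ n * normal_density m s u)"
  have intf: "integrable lborel f"
  proof -
    have i1: "integrable lborel (\<lambda>u. real n * (u ^ (n - 1) * normal_density m s u))"
      by (intro integrable_mult_right integrable_poly_normal s)
    have i2: "integrable lborel (\<lambda>u. (1 / s\<^sup>2) * (u ^ Suc n * normal_density m s u))"
      by (intro integrable_mult_right integrable_poly_normal s)
    have i3: "integrable lborel (\<lambda>u. (m / s\<^sup>2) * (u ^ n * normal_density m s u))"
      by (intro integrable_mult_right integrable_poly_normal s)
    have "integrable lborel (\<lambda>u. real n * (u ^ (n - 1) * normal_density m s u) - (1 / s\<^sup>2) * (u ^ Suc n * normal_density m s u) + (m / s\<^sup>2) * (u ^ n * normal_density m s u))"
      using i1 i2 i3 by auto
    moreover have "(\<lambda>u. real n * (u ^ (n - 1) * normal_density m s u) - (1 / s\<^sup>2) * (u ^ Suc n * normal_density m s u) + (m / s\<^sup>2) * (u ^ n * normal_density m s u)) = f"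
      unfolding f_def by (auto simp: fun_eq_iff diff_divide_distrib add_divide_distrib algebra_simps)
    ultimately show ?thesis by simp
  qed
  have intf': "integrable lborel (\<lambda>u. indicator {0..} u *\<^sub>R f u)"
    by (intro integrable_mult_indicator intf) auto
  have L1: "((\<lambda>y. \<integral>x. indicator {..y} x *\<^sub>R (indicator {0..} x *\<^sub>R f x) \<partial>lborel) \<longlongrightarrow> (\<integral>x. indicator {0..} x *\<^sub>R f x \<partial>lborel)) at_top"
    by (rule tendsto_integral_at_top, simp, rule intf')
  have FL: "(F \<longlongrightarrow> 0) at_top"
    unfolding F_def normal_density_def using s by real_asymp
  have L2: "((\<lambda>y. F y - F 0) \<longlongrightarrow> 0 - F 0) at_top"
    by (intro tendsto_intros FL)
  have ev: "eventually (\<lambda>y. (\<integral>x. indicator {..y} x *\<^sub>R (indicator {0..} x *\<^sub>R f x) \<partial>lborel) = F y - F 0) at_top"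
  proof (rule eventually_at_top_linorder[THEN iffD2], rule exI[of _ 0], intro allI impI)
    fix y :: real assume y: "0 \<le> y"
    have "(\<integral>x. indicator {..y} x *\<^sub>R (indicator {0..} x *\<^sub>R f x) \<partial>lborel) = (\<integral>x. indicator {0..y} x *\<^sub>R f x \<partial>lborel)"
      by (intro Bochner_Integration.integral_cong) (auto split: split_indicator)
    also have "\<dots> = F y - F 0"
    proof (rule integral_FTC_atLeastAtMost[OF y])
      fix x
      have d: "(F has_real_derivative f x) (at x)"
        unfolding F_def f_def by (rule deriv_poly_normal[OF s])
      show "(F has_vector_derivative f x) (at x within {0..y})"
        using has_vector_derivative_at_within[OF d[unfolded has_real_derivative_iff_has_vector_derivative]] .
    next
      show "continuous_on {0..y} f" unfolding f_def by (rule cont_poly_normal[OF s])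
    qed
    finally show "(\<integral>x. indicator {..y} x *\<^sub>R (indicator {0..} x *\<^sub>R f x) \<partial>lborel) = F y - F 0" .
  qed
  have ev': "eventually (\<lambda>y. F y - F 0 = (\<integral>x. indicator {..y} x *\<^sub>R (indicator {0..} x *\<^sub>R f x) \<partial>lborel)) at_top"
    using ev by (rule eventually_mono) (rule sym)
  have L3: "((\<lambda>y. \<integral>x. indicator {..y} x *\<^sub>R (indicator {0..} x *\<^sub>R f x) \<partial>lborel) \<longlongrightarrow> 0 - F 0) at_top"
    by (rule Lim_transform_eventually[OF L2 ev'])
  have "(\<integral>x. indicator {0..} x *\<^sub>R f x \<partial>lborel) = 0 - F 0"
    using tendsto_unique[OF _ L1 L3] by simp
  then show ?thesis unfolding f_def F_def by simp
qed

lemma Jm_rec: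
  assumes s: "0 < s"
  shows "Jm m s (Suc n) = m * Jm m s n + s\<^sup>2 * (real n * Jm m s (n - 1) + 0 ^ n * normal_density m s 0)"
proof -
  let ?nd = "normal_density m s"
  have i: "\<And>k. integrable lborel (\<lambda>u. indicator {0<..} u * u ^ k * ?nd u)"
    by (rule integrable_poly_normal_ind[OF s]) auto
  have "(\<integral>u. indicator {0..} u * (real n * u ^ (n - 1) * ?nd u - u ^ n * (u - m) / s\<^sup>2 * ?nd u) \<partial>lborel)
      = (\<integral>u. indicator {0<..} u * (real n * u ^ (n - 1) * ?nd u - u ^ n * (u - m) / s\<^sup>2 * ?nd u) \<partial>lborel)"
    by (intro integral_cong_AE AE_I[where N="{0}"]) (auto split: split_indicator)
  also have "\<dots> = (\<integral>u. real n * (indicator {0<..} u * u ^ (n - 1) * ?nd u)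
        - (1 / s\<^sup>2) * (indicator {0<..} u * u ^ Suc n * ?nd u)
        + (m / s\<^sup>2) * (indicator {0<..} u * u ^ n * ?nd u) \<partial>lborel)"
    by (intro Bochner_Integration.integral_cong refl) (simp add: diff_divide_distrib algebra_simps)
  also have "\<dots> = real n * Jm m s (n - 1) - (1 / s\<^sup>2) * Jm m s (Suc n) + (m / s\<^sup>2) * Jm m s n"
  proof (rule has_bochner_integral_integral_eq)
    have h: "\<And>k. has_bochner_integral lborel (\<lambda>u. indicator {0<..} u * u ^ k * ?nd u) (Jm m s k)"
      unfolding Jm_def by (rule has_bochner_integral_integrable[OF i])
    show "has_bochner_integral lborel (\<lambda>u. real n * (indicator {0<..} u * u ^ (n - 1) * ?nd u)
        - (1 / s\<^sup>2) * (indicator {0<..} u * u ^ Suc n * ?nd u)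
        + (m / s\<^sup>2) * (indicator {0<..} u * u ^ n * ?nd u))
        (real n * Jm m s (n - 1) - (1 / s\<^sup>2) * Jm m s (Suc n) + (m / s\<^sup>2) * Jm m s n)"
      by (intro has_bochner_integral_add has_bochner_integral_diff has_bochner_integral_mult_right h)
  qed
  finally have "real n * Jm m s (n - 1) - (1 / s\<^sup>2) * Jm m s (Suc n) + (m / s\<^sup>2) * Jm m s n
      = - (0 ^ n * ?nd 0)"
    using ftc_poly_normal[OF s, of n m] by simp
  then show ?thesis using s by (simp add: field_simps)
qed

lemma mvmult_borel[measurable]: "(\<lambda>x. (A::real^'n^'m) *v x) \<in> borel_measurable borel"
  by (rule borel_measurable_continuous_onI) (intro continuous_intros)

lemma disint:
  fixes M :: "'s measure" and U :: "'s \<Rightarrow> real" and Z :: "'s \<Rightarrow> real^'p"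
    and \<xi> \<delta> :: "real^'p" and \<omega> :: "real^'p^'p"
    and fU :: "real \<Rightarrow> real" and \<phi>Z :: "real^'p \<Rightarrow> real" and g :: "real^'p \<Rightarrow> real"
    and t :: "real^'p \<Rightarrow> real \<Rightarrow> real"
    and K :: "real \<times> (real^'p) \<Rightarrow> ennreal"
  assumes P: "prob_space M"
    and U_rv[measurable]: "U \<in> borel_measurable M" and Z_rv[measurable]: "Z \<in> borel_measurable M"
    and U_d: "distr M lborel U = density lborel (\<lambda>u. ennreal (fU u))"
    and Z_d: "distr M lborel Z = density lborel (\<lambda>z. ennreal (\<phi>Z z))"
    and indep: "distr M (borel \<Otimes>\<^sub>M borel) (\<lambda>s. (U s, Z s)) = distr M borel U \<Otimes>\<^sub>M distr M borel Z"
    and fU_m[measurable]: "fU \<in> borel_measurable borel" and phi_m[measurable]: "\<phi>Z \<in> borel_measurable borel"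
    and fU_nn: "\<And>u. 0 \<le> fU u" and phi_nn: "\<And>z. 0 \<le> \<phi>Z z"
    and fact: "\<And>u w. fU u * \<phi>Z (w - u *\<^sub>R \<delta>) = g w * t w u"
    and K: "K \<in> borel_measurable borel"
  shows "(\<integral>\<^sup>+s. K (U s, \<xi> + \<omega> *v (U s *\<^sub>R \<delta> + Z s)) \<partial>M)
       = (\<integral>\<^sup>+w. \<integral>\<^sup>+u. ennreal (g w * t w u) * K (u, \<xi> + \<omega> *v w) \<partial>lborel \<partial>lborel)"
proof -
  interpret prob_space M by (rule P)
  define K' where "K' = (\<lambda>x. K (fst x, \<xi> + \<omega> *v (fst x *\<^sub>R \<delta> + snd x)))"
  have Kp[measurable]: "K \<in> borel_measurable (borel \<Otimes>\<^sub>M borel)"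
    unfolding borel_prod by (rule K)
  have K'm[measurable]: "K' \<in> borel_measurable (borel \<Otimes>\<^sub>M borel)"
    unfolding K'_def by measurable
  have DU: "distr M borel U = density lborel (\<lambda>u. ennreal (fU u))"
    unfolding U_d[symmetric] by (rule distr_cong) simp_all
  have DZ: "distr M borel Z = density lborel (\<lambda>z. ennreal (\<phi>Z z))"
    unfolding Z_d[symmetric] by (rule distr_cong) simp_all
  interpret PZ: prob_space "density lborel (\<lambda>z. ennreal (\<phi>Z z))"
    unfolding DZ[symmetric] by (rule prob_space_distr) simp
  have "(\<integral>\<^sup>+s. K (U s, \<xi> + \<omega> *v (U s *\<^sub>R \<delta> + Z s)) \<partial>M) = (\<integral>\<^sup>+s. K' (U s, Z s) \<partial>M)"
    unfolding K'_def by simp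
  also have "\<dots> = (\<integral>\<^sup>+x. K' x \<partial>distr M (borel \<Otimes>\<^sub>M borel) (\<lambda>s. (U s, Z s)))"
    by (rule nn_integral_distr[symmetric]) simp_all
  also have "\<dots> = (\<integral>\<^sup>+x. K' x \<partial>(density lborel (\<lambda>u. ennreal (fU u)) \<Otimes>\<^sub>M density lborel (\<lambda>z. ennreal (\<phi>Z z))))"
    unfolding indep DU DZ ..
  also have "\<dots> = (\<integral>\<^sup>+u. \<integral>\<^sup>+z. K' (u, z) \<partial>density lborel (\<lambda>z. ennreal (\<phi>Z z)) \<partial>density lborel (\<lambda>u. ennreal (fU u)))"
    by (rule PZ.nn_integral_fst[symmetric]) simp
  also have "\<dots> = (\<integral>\<^sup>+u. ennreal (fU u) * (\<integral>\<^sup>+z. ennreal (\<phi>Z z) * K' (u, z) \<partial>lborel) \<partial>lborel)"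
    by (simp add: nn_integral_density PZ.borel_measurable_nn_integral_fst)
  also have "\<dots> = (\<integral>\<^sup>+u. ennreal (fU u) * (\<integral>\<^sup>+w. ennreal (\<phi>Z (w - u *\<^sub>R \<delta>)) * K (u, \<xi> + \<omega> *v w) \<partial>lborel) \<partial>lborel)"
  proof (intro nn_integral_cong)
    fix u :: real
    have "(\<integral>\<^sup>+w. ennreal (\<phi>Z (w - u *\<^sub>R \<delta>)) * K (u, \<xi> + \<omega> *v w) \<partial>lborel)
        = (\<integral>\<^sup>+w. ennreal (\<phi>Z (w - u *\<^sub>R \<delta>)) * K (u, \<xi> + \<omega> *v w) \<partial>distr lborel borel ((+) (u *\<^sub>R \<delta>)))"
      by (simp add: lborel_distr_plus)
    also have "\<dots> = (\<integral>\<^sup>+z. ennreal (\<phi>Z z) * K' (u, z) \<partial>lborel)"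
      by (subst nn_integral_distr) (simp_all add: K'_def)
    finally show "ennreal (fU u) * (\<integral>\<^sup>+z. ennreal (\<phi>Z z) * K' (u, z) \<partial>lborel) = ennreal (fU u) * (\<integral>\<^sup>+w. ennreal (\<phi>Z (w - u *\<^sub>R \<delta>)) * K (u, \<xi> + \<omega> *v w) \<partial>lborel)"
      by simp
  qed
  also have "\<dots> = (\<integral>\<^sup>+u. \<integral>\<^sup>+w. ennreal (fU u) * (ennreal (\<phi>Z (w - u *\<^sub>R \<delta>)) * K (u, \<xi> + \<omega> *v w)) \<partial>lborel \<partial>lborel)"
    by (intro nn_integral_cong nn_integral_cmult[symmetric]) simp
  also have "\<dots> = (\<integral>\<^sup>+w. \<integral>\<^sup>+u. ennreal (fU u) * (ennreal (\<phi>Z (w - u *\<^sub>R \<delta>)) * K (u, \<xi> + \<omega> *v w)) \<partial>lborel \<partial>lborel)"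
    by (rule lborel_pair.Fubini'[where f="\<lambda>w u. ennreal (fU u) * (ennreal (\<phi>Z (w - u *\<^sub>R \<delta>)) * K (u, \<xi> + \<omega> *v w))"])
       measurable
  also have "\<dots> = (\<integral>\<^sup>+w. \<integral>\<^sup>+u. ennreal (g w * t w u) * K (u, \<xi> + \<omega> *v w) \<partial>lborel \<partial>lborel)"
  proof (intro nn_integral_cong)
    fix w u
    have "ennreal (fU u) * (ennreal (\<phi>Z (w - u *\<^sub>R \<delta>)) * K (u, \<xi> + \<omega> *v w))
        = ennreal (fU u * \<phi>Z (w - u *\<^sub>R \<delta>)) * K (u, \<xi> + \<omega> *v w)"
      using fU_nn phi_nn by (simp add: ennreal_mult mult.assoc)
    then show "ennreal (fU u) * (ennreal (\<phi>Z (w - u *\<^sub>R \<delta>)) * K (u, \<xi> + \<omega> *v w))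
        = ennreal (g w * t w u) * K (u, \<xi> + \<omega> *v w)"
      by (simp add: fact)
  qed
  finally show ?thesis .
qed

definition tnd :: "real \<Rightarrow> real \<Rightarrow> real \<Rightarrow> real" where
  "tnd a b u = indicator {0<..} u * normal_density a (sqrt b) u / (1 - std_normal_cdf (- a / sqrt b))"

lemma trunc_normal_tnd: "trunc_normal a b = density lborel (\<lambda>u. ennreal (tnd a b u))"
  by (simp add: trunc_normal_def tnd_def)

lemma tnd_nonneg: "0 \<le> tnd a b u"
  unfolding tnd_def using Phi_tail_pos[of "- a / sqrt b"] by (simp split: split_indicator)

lemma Phi_mono: "mono std_normal_cdf"
proof
  fix x y :: real assume "x \<le> y"
  interpret prob_space "density lborel std_normal_density" by (rule prob_space_std)
  show "std_normal_cdf x \<le> std_normal_cdf y"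
    unfolding std_normal_cdf_def using \<open>x \<le> y\<close> by (intro finite_measure_mono) auto
qed

lemma Phi_borel[measurable]: "std_normal_cdf \<in> borel_measurable borel"
  by (rule borel_measurable_mono[OF Phi_mono])

lemma tnd_measurable[measurable (raw)]:
  assumes [measurable]: "A \<in> borel_measurable M" "B \<in> borel_measurable M"
  shows "(\<lambda>x. tnd (A x) b (B x)) \<in> borel_measurable M"
  unfolding tnd_def normal_density_def by measurable

lemma tnd_total:
  assumes b: "0 < b"
  shows "(\<integral>\<^sup>+u. ennreal (tnd a b u) \<partial>lborel) = 1"
proof -
  let ?Z = "1 - std_normal_cdf (- a / sqrt b)"
  have Z: "0 < ?Z" by (rule Phi_tail_pos)
  have "(\<integral>\<^sup>+u. ennreal (tnd a b u) \<partial>lborel)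
      = (\<integral>\<^sup>+u. ennreal (indicator {0<..} u * normal_density a (sqrt b) u) * ennreal (1 / ?Z) \<partial>lborel)"
    unfolding tnd_def using Z by (intro nn_integral_cong) (simp add: ennreal_mult[symmetric] divide_inverse)
  also have "\<dots> = (\<integral>\<^sup>+u. ennreal (indicator {0<..} u * normal_density a (sqrt b) u) \<partial>lborel) * ennreal (1 / ?Z)"
    by (rule nn_integral_multc) simp
  also have "\<dots> = ennreal ?Z * ennreal (1 / ?Z)"
    using b by (simp add: nn_tail_normal)
  also have "\<dots> = 1" using Z by (simp add: ennreal_mult[symmetric])
  finally show ?thesis .
qed

lemma prob_space_TN: "0 < b \<Longrightarrow> prob_space (trunc_normal a b)"
  by (rule prob_spaceI) (simp add: trunc_normal_tnd emeasure_density tnd_total)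

lemma cond_exp_TN:
  fixes M :: "'s measure" and U :: "'s \<Rightarrow> real" and Z :: "'s \<Rightarrow> real^'p"
    and \<xi> \<delta> :: "real^'p" and \<omega> :: "real^'p^'p"
    and fU :: "real \<Rightarrow> real" and \<phi>Z :: "real^'p \<Rightarrow> real" and g :: "real^'p \<Rightarrow> real"
    and a :: "real^'p \<Rightarrow> real" and b :: real and f :: "real \<Rightarrow> real"
  assumes P: "prob_space M"
    and U_rv[measurable]: "U \<in> borel_measurable M" and Z_rv[measurable]: "Z \<in> borel_measurable M"
    and U_d: "distr M lborel U = density lborel (\<lambda>u. ennreal (fU u))"
    and Z_d: "distr M lborel Z = density lborel (\<lambda>z. ennreal (\<phi>Z z))"
    and indep: "distr M (borel \<Otimes>\<^sub>M borel) (\<lambda>s. (U s, Z s)) = distr M borel U \<Otimes>\<^sub>M distr M borel Z"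
    and fU_m[measurable]: "fU \<in> borel_measurable borel" and phi_m[measurable]: "\<phi>Z \<in> borel_measurable borel"
    and fU_nn: "\<And>u. 0 \<le> fU u" and phi_nn: "\<And>z. 0 \<le> \<phi>Z z"
    and fact: "\<And>u w. fU u * \<phi>Z (w - u *\<^sub>R \<delta>) = g w * tnd (a (\<xi> + \<omega> *v w)) b u"
    and g_nn: "\<And>w. 0 \<le> g w"
    and b: "0 < b" and a_m[measurable]: "a \<in> borel_measurable borel"
    and f_m[measurable]: "f \<in> borel_measurable borel" and f_nn: "\<And>u. 0 \<le> f u"
    and f_int: "integrable M (\<lambda>s. f (U s))"
    and f_TN: "\<And>y. integrable (trunc_normal (a y) b) f"
  defines "Y \<equiv> \<lambda>s. \<xi> + \<omega> *v (U s *\<^sub>R \<delta> + Z s)"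
  shows "AE s in M. real_cond_exp M (vimage_algebra (space M) Y borel) (\<lambda>s. f (U s)) s
            = (\<integral>u. f u \<partial>trunc_normal (a (Y s)) b)"
proof -
  interpret prob_space M by (rule P)
  define F where "F = vimage_algebra (space M) Y borel"
  have Y_m[measurable]: "Y \<in> borel_measurable M" unfolding Y_def by measurable
  define h where "h = (\<lambda>y. \<integral>u. tnd (a y) b u * f u \<partial>lborel)"
  have h_eq: "(\<integral>u. f u \<partial>trunc_normal (a y) b) = h y" for y
    unfolding trunc_normal_tnd h_def by (subst integral_density) (auto simp: tnd_nonneg)
  have h_m[measurable]: "h \<in> borel_measurable borel"
    unfolding h_def by (rule lborel.borel_measurable_lebesgue_integral) measurable
  have h_nn: "0 \<le> h y" for y
    unfolding h_def by (intro integral_nonneg_AE AE_I2 mult_nonneg_nonneg tnd_nonneg f_nn)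
  have hTN: "(\<integral>\<^sup>+u. ennreal (tnd (a y) b u) * ennreal (f u) \<partial>lborel) = ennreal (h y)" for y
  proof -
    have "(\<integral>\<^sup>+u. ennreal (tnd (a y) b u) * ennreal (f u) \<partial>lborel) = (\<integral>\<^sup>+u. ennreal (f u) \<partial>trunc_normal (a y) b)"
      unfolding trunc_normal_tnd by (subst nn_integral_density) auto
    also have "\<dots> = ennreal (\<integral>u. f u \<partial>trunc_normal (a y) b)"
      by (rule nn_integral_eq_integral[OF f_TN]) (simp add: f_nn)
    finally show ?thesis by (simp add: h_eq)
  qed
  have key: "(\<integral>\<^sup>+s. indicator C (Y s) * ennreal (f (U s)) \<partial>M) = (\<integral>\<^sup>+s. indicator C (Y s) * ennreal (h (Y s)) \<partial>M)"
    if C[measurable]: "C \<in> sets borel" for C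
  proof -
    have K1: "(\<lambda>p::real \<times> (real^'p). indicator C (snd p) * ennreal (f (fst p))) \<in> borel_measurable borel"
      by (subst borel_prod[symmetric]) measurable
    have K2: "(\<lambda>p::real \<times> (real^'p). indicator C (snd p) * ennreal (h (snd p))) \<in> borel_measurable borel"
      by (subst borel_prod[symmetric]) measurable
    note D1 = disint[OF P U_rv Z_rv U_d Z_d indep fU_m phi_m fU_nn phi_nn fact K1]
    note D2 = disint[OF P U_rv Z_rv U_d Z_d indep fU_m phi_m fU_nn phi_nn fact K2]
    have inner: "(\<integral>\<^sup>+u. ennreal (g w * tnd (a (\<xi> + \<omega> *v w)) b u) * (indicator C (\<xi> + \<omega> *v w) * ennreal (f u)) \<partial>lborel)
        = (\<integral>\<^sup>+u. ennreal (g w * tnd (a (\<xi> + \<omega> *v w)) b u) * (indicator C (\<xi> + \<omega> *v w) * ennreal (h (\<xi> + \<omega> *v w))) \<partial>lborel)"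
      for w
    proof -
      let ?y = "\<xi> + \<omega> *v w"
      have "(\<integral>\<^sup>+u. ennreal (g w * tnd (a ?y) b u) * (indicator C ?y * ennreal (f u)) \<partial>lborel)
          = (\<integral>\<^sup>+u. (ennreal (g w) * indicator C ?y) * (ennreal (tnd (a ?y) b u) * ennreal (f u)) \<partial>lborel)"
        by (intro nn_integral_cong) (simp add: ennreal_mult g_nn tnd_nonneg ac_simps)
      also have "\<dots> = (ennreal (g w) * indicator C ?y) * ennreal (h ?y)"
        by (subst nn_integral_cmult) (auto simp: hTN)
      also have "\<dots> = (ennreal (g w) * indicator C ?y * ennreal (h ?y)) * (\<integral>\<^sup>+u. ennreal (tnd (a ?y) b u) \<partial>lborel)"
        using b by (simp add: tnd_total)
      also have "\<dots> = (\<integral>\<^sup>+u. (ennreal (g w) * indicator C ?y * ennreal (h ?y)) * ennreal (tnd (a ?y) b u) \<partial>lborel)"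
        by (subst nn_integral_cmult) auto
      also have "\<dots> = (\<integral>\<^sup>+u. ennreal (g w * tnd (a ?y) b u) * (indicator C ?y * ennreal (h ?y)) \<partial>lborel)"
        by (intro nn_integral_cong) (simp add: ennreal_mult g_nn tnd_nonneg ac_simps)
      finally show ?thesis .
    qed
    have "(\<integral>\<^sup>+s. indicator C (Y s) * ennreal (f (U s)) \<partial>M)
        = (\<integral>\<^sup>+w. \<integral>\<^sup>+u. ennreal (g w * tnd (a (\<xi> + \<omega> *v w)) b u) * (indicator C (\<xi> + \<omega> *v w) * ennreal (f u)) \<partial>lborel \<partial>lborel)"
      using D1 unfolding Y_def by simp
    also have "\<dots> = (\<integral>\<^sup>+w. \<integral>\<^sup>+u. ennreal (g w * tnd (a (\<xi> + \<omega> *v w)) b u) * (indicator C (\<xi> + \<omega> *v w) * ennreal (h (\<xi> + \<omega> *v w))) \<partial>lborel \<partial>lborel)"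
      by (intro nn_integral_cong inner)
    also have "\<dots> = (\<integral>\<^sup>+s. indicator C (Y s) * ennreal (h (Y s)) \<partial>M)"
      using D2 unfolding Y_def by simp
    finally show ?thesis .
  qed
  have fin: "(\<integral>\<^sup>+s. ennreal (f (U s)) \<partial>M) < \<infinity>"
    using nn_integral_eq_integral[OF f_int] f_nn by simp
  have hY_int: "integrable M (\<lambda>s. h (Y s))"
  proof (rule integrableI_nonneg)
    show "AE x in M. 0 \<le> h (Y x)" by (simp add: h_nn)
    have "(\<integral>\<^sup>+s. ennreal (h (Y s)) \<partial>M) = (\<integral>\<^sup>+s. ennreal (f (U s)) \<partial>M)"
      using key[of UNIV] by simp
    then show "(\<integral>\<^sup>+s. ennreal (h (Y s)) \<partial>M) < \<infinity>" using fin by simp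
  qed simp
  have subalg: "subalgebra M F"
    using sets_image_in_sets[OF refl Y_m] unfolding subalgebra_def F_def by auto
  interpret sigma_finite_subalgebra M F
    by (rule finite_measure_subalgebra_is_sigma_finite)
       (intro finite_measure_subalgebra.intro finite_measure_subalgebra_axioms.intro subalg finite_measure_axioms)
  have "AE s in M. real_cond_exp M F (\<lambda>s. f (U s)) s = h (Y s)"
  proof (rule real_cond_exp_charact)
    show "integrable M (\<lambda>s. f (U s))" by (rule f_int)
    show "integrable M (\<lambda>s. h (Y s))" by (rule hY_int)
    show "(\<lambda>s. h (Y s)) \<in> borel_measurable F"
      unfolding F_def by (rule measurable_compose[OF measurable_vimage_algebra1 h_m]) simp
    fix A assume "A \<in> sets F"
    then obtain C where C: "C \<in> sets borel" and A: "A = Y -` C \<inter> space M"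
      unfolding F_def by (subst (asm) sets_vimage_algebra2) auto
    have ind: "indicator A s = indicator C (Y s)" if "s \<in> space M" for s :: 's
      using that unfolding A by (simp split: split_indicator)
    have A_m: "A \<in> sets M" unfolding A using C by measurable
    have "(\<integral>s\<in>A. f (U s) \<partial>M) = enn2real (\<integral>\<^sup>+s. ennreal (indicator A s * f (U s)) \<partial>M)"
      unfolding set_lebesgue_integral_def using A_m
      by (subst integral_eq_nn_integral) (auto simp: f_nn)
    also have "\<dots> = enn2real (\<integral>\<^sup>+s. indicator C (Y s) * ennreal (f (U s)) \<partial>M)"
      by (intro arg_cong[where f=enn2real] nn_integral_cong) (simp add: ind split: split_indicator)
    also have "\<dots> = enn2real (\<integral>\<^sup>+s. indicator C (Y s) * ennreal (h (Y s)) \<partial>M)"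
      by (simp add: key C)
    also have "\<dots> = enn2real (\<integral>\<^sup>+s. ennreal (indicator A s * h (Y s)) \<partial>M)"
      by (intro arg_cong[where f=enn2real] nn_integral_cong) (simp add: ind split: split_indicator)
    also have "\<dots> = (\<integral>s\<in>A. h (Y s) \<partial>M)"
      unfolding set_lebesgue_integral_def using A_m
      by (subst integral_eq_nn_integral) (auto simp: h_nn)
    finally show "(\<integral>s\<in>A. f (U s) \<partial>M) = (\<integral>s\<in>A. h (Y s) \<partial>M)" .
  qed
  then show ?thesis unfolding F_def by (simp add: h_eq)
qed

lemma exponent_eq:
  fixes e d q u :: real
  assumes e: "0 < e"
  shows "- u + - (q - 2 * u * d + u\<^sup>2 * e) / 2
       = (- q / 2 + ((d - 1) / sqrt e)\<^sup>2 / 2) + - (u - (d - 1) / sqrt e / sqrt e)\<^sup>2 / (2 * (1 / sqrt e)\<^sup>2)"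
proof -
  have s2: "(sqrt e)\<^sup>2 = e" using e by simp
  have sne: "sqrt e \<noteq> 0" using e by simp
  have "((d - 1) / sqrt e)\<^sup>2 = (d - 1)\<^sup>2 / e" by (simp add: power_divide s2)
  moreover have "(d - 1) / sqrt e / sqrt e = (d - 1) / e" using s2 by (simp add: power2_eq_square)
  moreover have "(2 * (1 / sqrt e)\<^sup>2) = 2 / e" by (simp add: power_divide s2)
  ultimately show ?thesis using e by (simp add: field_simps power2_eq_square)
qed

lemma cancel_aux:
  fixes X Z s \<eta> c E2 :: real
  assumes "Z \<noteq> 0" "\<eta> \<noteq> 0" "s \<noteq> 0"
  shows "(X * Z * s / (\<eta> * c)) * ((\<eta> / s) * E2 / Z) = X * E2 / c"
  using assms by (cases "c = 0") (simp_all add: field_simps)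

lemma fact_alg:
  fixes e \<eta> A d q c u :: real
  assumes e: "0 < e" and \<eta>: "\<eta> = sqrt e" and A: "A = (d - 1) / \<eta>"
  shows "indicator {0<..} u * exp (- u) * (exp (- (q - 2 * u * d + u\<^sup>2 * e) / 2) / c)
       = (exp (- q / 2 + A\<^sup>2 / 2) * (1 - std_normal_cdf (- A)) * sqrt (2 * pi) / (\<eta> * c)) * tnd (A / \<eta>) (1 / \<eta>\<^sup>2) u"
proof (cases "0 < u")
  case False
  then show ?thesis by (simp add: tnd_def)
next
  case True
  have ep: "0 < \<eta>" using e \<eta> by simp
  have Z: "0 < 1 - std_normal_cdf (- A)" by (rule Phi_tail_pos)
  have sq: "sqrt (1 / \<eta>\<^sup>2) = 1 / \<eta>" using ep by (simp add: real_sqrt_divide)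
  have sA: "- (A / \<eta>) / (1 / \<eta>) = - A" using ep by simp
  have sp: "sqrt (2 * pi * (1 / \<eta>)\<^sup>2) = sqrt (2 * pi) / \<eta>"
    using ep by (simp add: real_sqrt_mult real_sqrt_divide power_divide)
  have ex: "exp (- u) * exp (- (q - 2 * u * d + u\<^sup>2 * e) / 2)
      = exp (- q / 2 + A\<^sup>2 / 2) * exp (- (u - A / \<eta>)\<^sup>2 / (2 * (1 / \<eta>)\<^sup>2))"
    unfolding exp_add[symmetric] A \<eta> using exponent_eq[OF e] by simp
  define E2 where "E2 = exp (- (u - A / \<eta>)\<^sup>2 / (2 * (1 / \<eta>)\<^sup>2))"
  have T: "tnd (A / \<eta>) (1 / \<eta>\<^sup>2) u = (\<eta> / sqrt (2 * pi)) * E2 / (1 - std_normal_cdf (- A))"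
    unfolding tnd_def normal_density_def sq sA sp E2_def using True by simp
  have R: "(exp (- q / 2 + A\<^sup>2 / 2) * (1 - std_normal_cdf (- A)) * sqrt (2 * pi) / (\<eta> * c)) * tnd (A / \<eta>) (1 / \<eta>\<^sup>2) u
      = exp (- q / 2 + A\<^sup>2 / 2) * E2 / c"
    unfolding T using Z ep by (intro cancel_aux) auto
  have L: "indicator {0<..} u * exp (- u) * (exp (- (q - 2 * u * d + u\<^sup>2 * e) / 2) / c)
      = exp (- u) * exp (- (q - 2 * u * d + u\<^sup>2 * e) / 2) / c"
    using True by simp
  show ?thesis unfolding L R ex E2_def ..
qed

lemma mm_diff_l: "(A::real^'n^'m) ** (B - C) = A ** B - A ** C"
  by (simp add: matrix_matrix_mult_def vec_eq_iff sum_subtractf right_diff_distrib)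

lemma mm_diff_r: "(B - C) ** (A::real^'n^'m) = B ** A - C ** A"
  by (simp add: matrix_matrix_mult_def vec_eq_iff sum_subtractf left_diff_distrib)

lemma minv_props:
  fixes A :: "real^'n^'n"
  assumes "invertible A"
  shows "A ** matrix_inv A = mat 1" "matrix_inv A ** A = mat 1"
proof -
  have "\<exists>A'. A ** A' = mat 1 \<and> A' ** A = mat 1" using assms unfolding invertible_def by blast
  then have "A ** matrix_inv A = mat 1 \<and> matrix_inv A ** A = mat 1"
    unfolding matrix_inv_def by (rule someI_ex)
  then show "A ** matrix_inv A = mat 1" "matrix_inv A ** A = mat 1" by auto
qed

lemma minv_unique:
  fixes A B :: "real^'n^'n"
  assumes BA: "B ** A = mat 1"
  shows "matrix_inv A = B"
proof -
  have AB: "A ** B = mat 1" using matrix_left_right_inverse BA by blast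
  then have inv: "invertible A" unfolding invertible_def using BA by blast
  have "matrix_inv A = (B ** A) ** matrix_inv A" by (simp add: BA)
  also have "\<dots> = B ** (A ** matrix_inv A)" by (simp add: matrix_mul_assoc)
  also have "\<dots> = B" by (simp add: minv_props[OF inv])
  finally show ?thesis .
qed

lemma posdef_inj:
  assumes "pos_def_mat S" "S *v x = 0"
  shows "x = 0"
  using assms unfolding pos_def_mat_def by force

lemma posdef_invertible:
  fixes S :: "real^'n^'n"
  assumes "pos_def_mat S"
  shows "invertible S"
proof -
  have "\<forall>x. S *v x = 0 \<longrightarrow> x = 0" using posdef_inj[OF assms] by blast
  then have "\<exists>B. B ** S = mat 1" using matrix_left_invertible_ker by blast
  then show ?thesis using invertible_left_inverse by blast
qed

lemma inv_sym:
  fixes A :: "real^'n^'n"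
  assumes sym: "transpose A = A" and inv: "invertible A"
  shows "transpose (matrix_inv A) = matrix_inv A"
proof -
  have "transpose (matrix_inv A) ** A = transpose (matrix_inv A) ** transpose A" by (simp add: sym)
  also have "\<dots> = transpose (A ** matrix_inv A)" by (simp add: matrix_transpose_mul)
  also have "\<dots> = mat 1" by (simp add: minv_props[OF inv] transpose_mat)
  finally show ?thesis using minv_unique by metis
qed

lemma sym_dot:
  fixes S :: "real^'n^'n"
  assumes "transpose S = S"
  shows "x \<bullet> (S *v y) = y \<bullet> (S *v x)"
proof -
  have "x \<bullet> (S *v y) = (x v* S) \<bullet> y" by (simp add: dot_lmul_matrix)
  also have "x v* S = transpose S *v x" by simp
  finally show ?thesis using assms by (simp add: inner_commute)
qed

lemma if_mult_zero: "(if P then a else 0) * (b::real) = (if P then a * b else 0)"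
  by simp

lemma mult_if_zero: "(b::real) * (if P then a else 0) = (if P then b * a else 0)"
  by simp

lemma omega_vec: "(omega_diag \<Omega> *v x) $ i = sqrt (\<Omega> $ i $ i) * x $ i"
  by (simp add: omega_diag_def matrix_vector_mult_def if_mult_zero)

lemma omega_sym: "transpose (omega_diag \<Omega>) = omega_diag \<Omega>"
  by (simp add: omega_diag_def transpose_def vec_eq_iff)

lemma posdef_diag:
  assumes "pos_def_mat (\<Omega>::real^'n^'n)"
  shows "0 < \<Omega> $ i $ i"
proof -
  have "axis i (1::real) \<noteq> 0" by (simp add: axis_eq_0_iff)
  then have "0 < axis i 1 \<bullet> (\<Omega> *v axis i 1)" using assms unfolding pos_def_mat_def by blast
  also have "axis i 1 \<bullet> (\<Omega> *v axis i 1) = \<Omega> $ i $ i"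
    by (simp add: inner_vec_def axis_def matrix_vector_mult_def if_mult_zero mult_if_zero)
  finally show ?thesis .
qed

lemma omega_invertible:
  assumes "pos_def_mat (\<Omega>::real^'n^'n)"
  shows "invertible (omega_diag \<Omega>)"
proof -
  have "\<forall>x. omega_diag \<Omega> *v x = 0 \<longrightarrow> x = 0"
  proof (intro allI impI)
    fix x :: "real^'n" assume "omega_diag \<Omega> *v x = 0"
    then have "\<And>i. sqrt (\<Omega> $ i $ i) * x $ i = 0" by (metis omega_vec zero_index)
    then show "x = 0" using posdef_diag[OF assms] by (simp add: vec_eq_iff) (metis less_irrefl)
  qed
  then have "\<exists>B. B ** omega_diag \<Omega> = mat 1" using matrix_left_invertible_ker by blast
  then show ?thesis using invertible_left_inverse by blast
qed

lemma matrix_main: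
  fixes \<Omega> :: "real^'p^'p" and \<delta> w :: "real^'p"
  assumes posdef: "pos_def_mat \<Omega>" and cov: "pos_def_mat (corr_mat \<Omega> - outer \<delta> \<delta>)"
  shows "(omega_diag \<Omega> *v \<delta>) \<bullet> (matrix_inv (\<Omega> - omega_diag \<Omega> ** outer \<delta> \<delta> ** omega_diag \<Omega>) *v (omega_diag \<Omega> *v w))
       = \<delta> \<bullet> (matrix_inv (corr_mat \<Omega> - outer \<delta> \<delta>) *v w)"
proof -
  define \<omega> where "\<omega> = omega_diag \<Omega>"
  define \<omega>i where "\<omega>i = matrix_inv \<omega>"
  define Sb where "Sb = corr_mat \<Omega> - outer \<delta> \<delta>"
  define S where "S = matrix_inv Sb"
  have oinv: "invertible \<omega>" unfolding \<omega>_def by (rule omega_invertible[OF posdef])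
  have o1: "\<omega> ** \<omega>i = mat 1" and o2: "\<omega>i ** \<omega> = mat 1" unfolding \<omega>i_def using minv_props[OF oinv] by auto
  have osym: "transpose \<omega>i = \<omega>i"
    unfolding \<omega>i_def by (rule inv_sym[OF _ oinv]) (simp add: \<omega>_def omega_sym)
  have Sbinv: "invertible Sb" unfolding Sb_def by (rule posdef_invertible[OF cov])
  have s1: "Sb ** S = mat 1" and s2: "S ** Sb = mat 1" unfolding S_def using minv_props[OF Sbinv] by auto
  have corr: "\<omega> ** corr_mat \<Omega> ** \<omega> = \<Omega>"
  proof -
    have "\<omega> ** corr_mat \<Omega> ** \<omega> = (\<omega> ** \<omega>i) ** \<Omega> ** (\<omega>i ** \<omega>)"
      unfolding corr_mat_def \<omega>i_def \<omega>_def by (simp add: matrix_mul_assoc)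
    then show ?thesis by (simp add: o1 o2)
  qed
  have SY: "\<Omega> - \<omega> ** outer \<delta> \<delta> ** \<omega> = \<omega> ** Sb ** \<omega>"
    unfolding Sb_def by (simp add: mm_diff_l mm_diff_r corr)
  have invSY: "matrix_inv (\<omega> ** Sb ** \<omega>) = \<omega>i ** S ** \<omega>i"
  proof (rule minv_unique)
    have "\<omega>i ** S ** \<omega>i ** (\<omega> ** Sb ** \<omega>) = \<omega>i ** S ** (\<omega>i ** \<omega>) ** Sb ** \<omega>"
      by (simp add: matrix_mul_assoc)
    also have "\<dots> = \<omega>i ** (S ** Sb) ** \<omega>" by (simp add: o2 matrix_mul_assoc)
    also have "\<dots> = mat 1" by (simp add: s2 o2)
    finally show "\<omega>i ** S ** \<omega>i ** (\<omega> ** Sb ** \<omega>) = mat 1" .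
  qed
  have "(\<omega>i ** S ** \<omega>i) *v (\<omega> *v w) = \<omega>i *v (S *v w)"
  proof -
    have "(\<omega>i ** S ** \<omega>i) *v (\<omega> *v w) = (\<omega>i ** S ** (\<omega>i ** \<omega>)) *v w"
      by (simp add: matrix_vector_mul_assoc matrix_mul_assoc)
    then show ?thesis by (simp add: o2 matrix_vector_mul_assoc)
  qed
  moreover have "(\<omega> *v \<delta>) \<bullet> (\<omega>i *v (S *v w)) = \<delta> \<bullet> (S *v w)"
  proof -
    have "(\<omega> *v \<delta>) \<bullet> (\<omega>i *v (S *v w)) = ((\<omega> *v \<delta>) v* \<omega>i) \<bullet> (S *v w)"
      by (simp add: dot_lmul_matrix)
    also have "(\<omega> *v \<delta>) v* \<omega>i = (\<omega> *v \<delta>) v* transpose \<omega>i" by (simp add: osym)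
    also have "\<dots> = \<omega>i *v (\<omega> *v \<delta>)" by (rule vector_transpose_matrix)
    also have "\<dots> = \<delta>" by (simp add: matrix_vector_mul_assoc o2)
    finally show ?thesis .
  qed
  ultimately show ?thesis
    unfolding \<omega>_def[symmetric] Sb_def[symmetric] S_def[symmetric] SY invSY by simp
qed

lemma eta_pos:
  fixes Sb :: "real^'p^'p"
  assumes cov: "pos_def_mat Sb" and dnz: "\<delta> \<noteq> 0"
  shows "0 < \<delta> \<bullet> (matrix_inv Sb *v \<delta>)"
proof -
  have inv: "invertible Sb" by (rule posdef_invertible[OF cov])
  define v where "v = matrix_inv Sb *v \<delta>"
  have "Sb *v v = \<delta>" unfolding v_def by (simp add: matrix_vector_mul_assoc minv_props[OF inv])
  moreover have "v \<noteq> 0" using \<open>Sb *v v = \<delta>\<close> dnz by auto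
  then have "0 < v \<bullet> (Sb *v v)" using cov unfolding pos_def_mat_def by blast
  ultimately show ?thesis unfolding v_def[symmetric] by (simp add: inner_commute)
qed

lemma quad_expand:
  fixes S :: "real^'p^'p"
  assumes "transpose S = S"
  shows "(w - u *\<^sub>R \<delta>) \<bullet> (S *v (w - u *\<^sub>R \<delta>))
     = w \<bullet> (S *v w) - 2 * u * (\<delta> \<bullet> (S *v w)) + u\<^sup>2 * (\<delta> \<bullet> (S *v \<delta>))"
proof -
  have e: "w \<bullet> (S *v \<delta>) = \<delta> \<bullet> (S *v w)" by (rule sym_dot[OF assms])
  show ?thesis
    by (simp add: matrix_vector_mult_diff_distrib matrix_vector_mult_scaleR inner_diff_left inner_diff_right e
        algebra_simps power2_eq_square)
qed

lemma J0_eq: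
  assumes s: "0 < s"
  shows "Jm m s 0 = 1 - std_normal_cdf (- m / s)"
proof -
  have i: "integrable lborel (\<lambda>u. indicator {0<..} u * u ^ 0 * normal_density m s u)"
    by (rule integrable_poly_normal_ind[OF s]) auto
  have "ennreal (Jm m s 0) = (\<integral>\<^sup>+u. ennreal (indicator {0<..} u * u ^ 0 * normal_density m s u) \<partial>lborel)"
    unfolding Jm_def by (rule nn_integral_eq_integral[OF i, symmetric]) (simp split: split_indicator)
  also have "\<dots> = ennreal (1 - std_normal_cdf (- m / s))"
    using nn_tail_normal[OF s, of m] by simp
  finally have "ennreal (Jm m s 0) = ennreal (1 - std_normal_cdf (- m / s))" .
  moreover have "0 \<le> Jm m s 0" unfolding Jm_def
    by (intro integral_nonneg_AE AE_I2) (simp split: split_indicator)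
  moreover have "0 \<le> 1 - std_normal_cdf (- m / s)" using Phi_tail_pos[of "- m / s"] by simp
  ultimately show ?thesis by simp
qed

lemma tnd_poly:
  "tnd a b u * (indicator {0<..} u * u ^ k)
     = (1 / (1 - std_normal_cdf (- a / sqrt b))) * (indicator {0<..} u * u ^ k * normal_density a (sqrt b) u)"
  unfolding tnd_def by (simp split: split_indicator)

lemma TN_integrable_moment:
  assumes b: "0 < b"
  shows "integrable (trunc_normal a b) (\<lambda>u. indicator {0<..} u * u ^ k)"
  unfolding trunc_normal_tnd
proof (subst integrable_density)
  show "integrable lborel (\<lambda>x. tnd a b x *\<^sub>R (indicator {0<..} x * x ^ k))"
    unfolding real_scaleR_def tnd_poly
    by (intro Bochner_Integration.integrable_mult_right integrable_poly_normal_ind) (use b in auto)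
qed (auto simp: tnd_nonneg)

lemma TN_moment:
  assumes b: "0 < b"
  shows "(\<integral>u. indicator {0<..} u * u ^ k \<partial>trunc_normal a b) = Jm a (sqrt b) k / Jm a (sqrt b) 0"
proof -
  have "(\<integral>u. indicator {0<..} u * u ^ k \<partial>trunc_normal a b)
      = (\<integral>u. tnd a b u *\<^sub>R (indicator {0<..} u * u ^ k) \<partial>lborel)"
    unfolding trunc_normal_tnd by (subst integral_density) (auto simp: tnd_nonneg)
  also have "\<dots> = (\<integral>u. (1 / (1 - std_normal_cdf (- a / sqrt b))) * (indicator {0<..} u * u ^ k * normal_density a (sqrt b) u) \<partial>lborel)"
    unfolding real_scaleR_def tnd_poly ..
  also have "\<dots> = Jm a (sqrt b) k / (1 - std_normal_cdf (- a / sqrt b))"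
    unfolding Jm_def by simp
  also have "1 - std_normal_cdf (- a / sqrt b) = Jm a (sqrt b) 0"
    using b by (simp add: J0_eq)
  finally show ?thesis .
qed

lemma TN_integrable_indicator:
  assumes b: "0 < b" and B: "B \<in> sets borel"
  shows "integrable (trunc_normal a b) (indicator B :: real \<Rightarrow> real)"
proof -
  interpret prob_space "trunc_normal a b" by (rule prob_space_TN[OF b])
  have ev: "B \<in> sets (trunc_normal a b)" using B by (simp add: trunc_normal_def)
  show ?thesis using ev by (auto simp: integrable_indicator_iff emeasure_eq_measure)
qed

lemma exp_moment_integrable:
  fixes M :: "'s measure" and U :: "'s \<Rightarrow> real"
  assumes U_rv[measurable]: "U \<in> borel_measurable M"
    and U_exp: "distr M lborel U = density lborel (\<lambda>u. ennreal (indicator {0<..} u * exp (- u)))"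
  shows "integrable M (\<lambda>s. indicator {0<..} (U s) * U s ^ k)"
proof -
  have "integrable lborel (\<lambda>u. (indicator {0<..} u * exp (- u)) *\<^sub>R (indicator {0<..} u * u ^ k))"
  proof (rule integrableI_nonneg)
    show "AE x in lborel. 0 \<le> (indicator {0<..} x * exp (- x)) *\<^sub>R (indicator {0<..} x * x ^ k)"
      by (intro AE_I2) (simp split: split_indicator)
    have "(\<integral>\<^sup>+x. ennreal ((indicator {0<..} x * exp (- x)) *\<^sub>R (indicator {0<..} x * x ^ k)) \<partial>lborel)
        \<le> (\<integral>\<^sup>+x. ennreal (erlang_density 0 1 x * x ^ k) \<partial>lborel)"
      by (intro nn_integral_mono) (auto simp: erlang_density_def split: split_indicator)
    also have "\<dots> = ennreal (fact k)"
      using nn_integral_erlang_ith_moment[of 1 0 k] by simp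
    also have "\<dots> < \<infinity>" by simp
    finally show "(\<integral>\<^sup>+x. ennreal ((indicator {0<..} x * exp (- x)) *\<^sub>R (indicator {0<..} x * x ^ k)) \<partial>lborel) < \<infinity>" .
  qed simp
  then have "integrable (density lborel (\<lambda>u. ennreal (indicator {0<..} u * exp (- u)))) (\<lambda>u. indicator {0<..} u * u ^ k)"
    by (subst integrable_density) (auto split: split_indicator)
  then have "integrable (distr M lborel U) (\<lambda>u. indicator {0<..} u * u ^ k)"
    unfolding U_exp .
  then show ?thesis by (subst (asm) integrable_distr_eq) auto
qed

lemma U_pos_AE:
  fixes M :: "'s measure" and U :: "'s \<Rightarrow> real"
  assumes U_rv[measurable]: "U \<in> borel_measurable M"
    and U_exp: "distr M lborel U = density lborel (\<lambda>u. ennreal (indicator {0<..} u * exp (- u)))"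
  shows "AE s in M. 0 < U s"
proof -
  have "AE u in density lborel (\<lambda>u. ennreal (indicator {0<..} u * exp (- u))). 0 < u"
    by (subst AE_density) (auto split: split_indicator)
  then have "AE u in distr M lborel U. 0 < u" unfolding U_exp .
  then show ?thesis by (subst (asm) AE_distr_iff) auto
qed

lemma h1_formula:
  assumes eta: "0 < (\<eta>::real)"
  shows "Jm (A / \<eta>) (1 / \<eta>) 1 / Jm (A / \<eta>) (1 / \<eta>) 0
       = (A + std_normal_density A / std_normal_cdf A) / \<eta>"
proof -
  let ?m = "A / \<eta>" and ?s = "1 / \<eta>"
  have s: "0 < ?s" using eta by simp
  have J1: "Jm ?m ?s 1 = ?m * Jm ?m ?s 0 + ?s\<^sup>2 * normal_density ?m ?s 0"
    using Jm_rec[OF s, of ?m 0] by simp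
  have ms: "- ?m / ?s = - A" using eta by simp
  have J0: "Jm ?m ?s 0 = std_normal_cdf A"
    using J0_eq[OF s, of ?m] ms Phi_sym by simp
  have J0pos: "0 < std_normal_cdf A" using Phi_tail_pos[of "- A"] Phi_sym by simp
  have nd0: "normal_density ?m ?s 0 = std_normal_density A * \<eta>"
    using eta by (simp add: normal_density_std[OF s] std_normal_density_def)
  show ?thesis
    unfolding J1 J0 nd0 using eta J0pos by (simp add: field_simps power2_eq_square)
qed

lemma hk_formula:
  assumes s: "0 < s" and k: "2 \<le> k"
  shows "Jm m s k / Jm m s 0
       = m * (Jm m s (k - 1) / Jm m s 0) + s\<^sup>2 * real (k - 1) * (Jm m s (k - 2) / Jm m s 0)"
proof -
  have k1: "Suc (k - 1) = k" using k by simp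
  have k2: "k - 1 - 1 = k - 2" by simp
  have z: "(0::real) ^ (k - 1) = 0" using k by simp
  have "Jm m s k = m * Jm m s (k - 1) + s\<^sup>2 * (real (k - 1) * Jm m s (k - 2))"
    using Jm_rec[OF s, of m "k - 1"] unfolding k1 k2 z by simp
  then show ?thesis by (simp add: add_divide_distrib)
qed

theorem theorem8:
  fixes M :: "'s measure"
    and U :: "'s \<Rightarrow> real" and Z :: "'s \<Rightarrow> real^'p"
    and \<xi> \<delta> :: "real^'p" and \<Omega> :: "real^'p^'p"
  defines "\<omega> \<equiv> omega_diag \<Omega>"
  defines "Y \<equiv> (\<lambda>s. \<xi> + \<omega> *v (U s *\<^sub>R \<delta> + Z s))"
  defines "\<Sigma>Y \<equiv> \<Omega> - \<omega> ** outer \<delta> \<delta> ** \<omega>"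
  defines "\<eta> \<equiv> sqrt ((\<omega> *v \<delta>) \<bullet> (matrix_inv \<Sigma>Y *v (\<omega> *v \<delta>)))"
  defines "A \<equiv> (\<lambda>y. ((\<omega> *v \<delta>) \<bullet> (matrix_inv \<Sigma>Y *v (y - \<xi>)) - 1) / \<eta>)"
  defines "F \<equiv> vimage_algebra (space M) Y borel"
  assumes P: "prob_space M"
    and posdef: "pos_def_mat \<Omega>"
    and cov: "pos_def_mat (corr_mat \<Omega> - outer \<delta> \<delta>)"
    and dnz: "\<delta> \<noteq> 0"
    and U_rv: "U \<in> borel_measurable M"
    and Z_rv: "Z \<in> borel_measurable M"
    and U_exp: "distr M lborel U = density lborel (\<lambda>u. ennreal (indicator {0<..} u * exp (- u)))"
    and Z_norm: "distr M lborel Z =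
                   density lborel (\<lambda>z. ennreal (mvn_density 0 (corr_mat \<Omega> - outer \<delta> \<delta>) z))"
    and indep: "distr M (borel \<Otimes>\<^sub>M borel) (\<lambda>s. (U s, Z s))
                 = distr M borel U \<Otimes>\<^sub>M distr M borel Z"
  shows "(\<forall>B \<in> sets borel. AE s in M.
            real_cond_exp M F (\<lambda>s. indicator B (U s)) s
              = measure (trunc_normal (A (Y s) / \<eta>) (1 / \<eta>\<^sup>2)) B)
       \<and> (AE s in M. real_cond_exp M F U s
              = (A (Y s) + std_normal_density (A (Y s)) / std_normal_cdf (A (Y s))) / \<eta>)
       \<and> (\<forall>k::nat. k \<ge> 2 \<longrightarrow> (AE s in M.
            real_cond_exp M F (\<lambda>s. U s ^ k) s
              = A (Y s) / \<eta> * real_cond_exp M F (\<lambda>s. U s ^ (k - 1)) s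
                + real (k - 1) / \<eta>\<^sup>2 * real_cond_exp M F (\<lambda>s. U s ^ (k - 2)) s))"
  proof -
  interpret prob_space M by (rule P)
  note U_m[measurable] = U_rv and Z_m[measurable] = Z_rv
  define Sb where "Sb = corr_mat \<Omega> - outer \<delta> \<delta>"
  define S where "S = matrix_inv Sb"
  define e where "e = \<delta> \<bullet> (S *v \<delta>)"
  define c where "c = sqrt ((2 * pi) ^ CARD('p) * det Sb)"
  have mm: "(\<omega> *v \<delta>) \<bullet> (matrix_inv \<Sigma>Y *v (\<omega> *v w)) = \<delta> \<bullet> (S *v w)" for w
    unfolding \<omega>_def \<Sigma>Y_def S_def Sb_def by (rule matrix_main[OF posdef cov])
  have e_pos: "0 < e" unfolding e_def S_def Sb_def by (rule eta_pos[OF cov dnz])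
  have eta_eq: "\<eta> = sqrt e" unfolding \<eta>_def e_def using mm[of \<delta>] by simp
  have eta_pos: "0 < \<eta>" using eta_eq e_pos by simp
  have Sbinv: "invertible Sb" unfolding Sb_def by (rule posdef_invertible[OF cov])
  have Ssym: "transpose S = S" unfolding S_def
    by (rule inv_sym[OF _ Sbinv]) (use cov in \<open>simp add: Sb_def pos_def_mat_def\<close>)
  have A_w: "A (\<xi> + \<omega> *v w) = (\<delta> \<bullet> (S *v w) - 1) / \<eta>" for w
    unfolding A_def using mm by simp
  have phiZ: "mvn_density 0 Sb z = exp (- (z \<bullet> (S *v z)) / 2) / c" for z
    unfolding mvn_density_def S_def c_def by simp
  have c_pos: "0 < c"
  proof (rule ccontr)
    assume "\<not> 0 < c"
    then have le: "mvn_density 0 Sb z \<le> 0" for z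
      unfolding phiZ by (intro divide_nonneg_nonpos) auto
    interpret PZ: prob_space "distr M lborel Z" by (rule prob_space_distr) (simp add: Z_rv)
    have "emeasure (distr M lborel Z) UNIV = (\<integral>\<^sup>+z. ennreal (mvn_density 0 Sb z) * indicator UNIV z \<partial>lborel)"
      unfolding Z_norm Sb_def[symmetric] by (subst emeasure_density) (auto simp: mvn_density_def)
    also have "\<dots> = 0" using le by (simp add: ennreal_neg)
    finally show False using PZ.emeasure_space_1 by simp
  qed
  define g where "g = (\<lambda>w. exp (- (w \<bullet> (S *v w)) / 2 + ((\<delta> \<bullet> (S *v w) - 1) / \<eta>)\<^sup>2 / 2)
      * (1 - std_normal_cdf (- ((\<delta> \<bullet> (S *v w) - 1) / \<eta>))) * sqrt (2 * pi) / (\<eta> * c))"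
  define a where "a = (\<lambda>y. A y / \<eta>)"
  define b where "b = 1 / \<eta>\<^sup>2"
  have b_pos: "0 < b" unfolding b_def using eta_pos by simp
  have fact: "indicator {0<..} u * exp (- u) * mvn_density 0 Sb (w - u *\<^sub>R \<delta>) = g w * tnd (a (\<xi> + \<omega> *v w)) b u"
    for u w
  proof -
    have "mvn_density 0 Sb (w - u *\<^sub>R \<delta>)
        = exp (- (w \<bullet> (S *v w) - 2 * u * (\<delta> \<bullet> (S *v w)) + u\<^sup>2 * e) / 2) / c"
      unfolding phiZ quad_expand[OF Ssym] e_def ..
    then show ?thesis
      unfolding g_def a_def b_def A_w
      using fact_alg[where d="\<delta> \<bullet> (S *v w)" and q="w \<bullet> (S *v w)" and u=u and c=c, OF e_pos eta_eq refl]
      by simp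
  qed
  have g_nn: "0 \<le> g w" for w
    unfolding g_def using eta_pos c_pos Phi_tail_pos by (intro mult_nonneg_nonneg divide_nonneg_nonneg) (auto intro: less_imp_le)
  have a_m[measurable]: "a \<in> borel_measurable borel"
    unfolding a_def A_def by measurable
  have phi_m[measurable]: "mvn_density 0 Sb \<in> borel_measurable borel"
    unfolding mvn_density_def by measurable
  have phi_nn: "0 \<le> mvn_density 0 Sb z" for z
    unfolding phiZ using c_pos by simp
  have Z_d: "distr M lborel Z = density lborel (\<lambda>z. ennreal (mvn_density 0 Sb z))"
    unfolding Z_norm Sb_def ..
  have ce: "AE s in M. real_cond_exp M F (\<lambda>s. f (U s)) s = (\<integral>u. f u \<partial>trunc_normal (a (Y s)) b)"
    if [measurable]: "f \<in> borel_measurable borel" and "\<And>u. 0 \<le> f u" and "integrable M (\<lambda>s. f (U s))"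
      and "\<And>y. integrable (trunc_normal (a y) b) f" for f
    unfolding F_def Y_def
    by (rule cond_exp_TN[OF P U_rv Z_rv U_exp Z_d indep _ phi_m _ phi_nn fact g_nn b_pos a_m that])
       (auto split: split_indicator)
  have Upos: "AE s in M. 0 < U s" by (rule U_pos_AE[OF U_rv U_exp])
  have Y_m[measurable]: "Y \<in> borel_measurable M" unfolding Y_def by measurable
  have subalg: "subalgebra M F"
    using sets_image_in_sets[OF refl Y_m] unfolding subalgebra_def F_def by auto
  interpret sigma_finite_subalgebra M F
    by (rule finite_measure_subalgebra_is_sigma_finite)
       (intro finite_measure_subalgebra.intro finite_measure_subalgebra_axioms.intro subalg finite_measure_axioms)
  define h where "h j y = (\<integral>u. indicator {0<..} u * u ^ j \<partial>trunc_normal (a y) b)" for j y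
  have mom: "AE s in M. real_cond_exp M F (\<lambda>s. U s ^ j) s = h j (Y s)" for j
  proof -
    have "AE s in M. real_cond_exp M F (\<lambda>s. U s ^ j) s = real_cond_exp M F (\<lambda>s. indicator {0<..} (U s) * U s ^ j) s"
    proof (rule real_cond_exp_cong)
      show "AE s in M. U s ^ j = indicator {0<..} (U s) * U s ^ j" using Upos by eventually_elim simp
    qed simp_all
    moreover have "AE s in M. real_cond_exp M F (\<lambda>s. indicator {0<..} (U s) * U s ^ j) s = h j (Y s)"
      unfolding h_def
      by (rule ce) (auto simp: exp_moment_integrable[OF U_rv U_exp] TN_integrable_moment[OF b_pos] split: split_indicator)
    ultimately show ?thesis by eventually_elim simp
  qed
  have hval: "h j y = Jm (a y) (sqrt b) j / Jm (a y) (sqrt b) 0" for j y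
    by (simp add: h_def TN_moment[OF b_pos])
  have sb: "sqrt b = 1 / \<eta>" unfolding b_def using eta_pos by (simp add: real_sqrt_divide)
  have part1: "\<forall>B \<in> sets borel. AE s in M. real_cond_exp M F (\<lambda>s. indicator B (U s)) s
              = measure (trunc_normal (A (Y s) / \<eta>) (1 / \<eta>\<^sup>2)) B"
  proof
    fix B :: "real set" assume B[measurable]: "B \<in> sets borel"
    have "AE s in M. real_cond_exp M F (\<lambda>s. indicator B (U s)) s = (\<integral>u. indicator B u \<partial>trunc_normal (a (Y s)) b)"
    proof (rule ce)
      have "integrable M (indicator (U -` B \<inter> space M) :: 's \<Rightarrow> real)"
        using measurable_sets[OF U_rv B] by (simp add: integrable_indicator_iff emeasure_eq_measure)
      then show "integrable M (\<lambda>s. indicator B (U s) :: real)"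
        by (rule Bochner_Integration.integrable_cong[THEN iffD1, rotated 2]) (auto split: split_indicator)
    qed (auto simp: TN_integrable_indicator[OF b_pos] split: split_indicator)
    then show "AE s in M. real_cond_exp M F (\<lambda>s. indicator B (U s)) s
              = measure (trunc_normal (A (Y s) / \<eta>) (1 / \<eta>\<^sup>2)) B"
      by (simp add: a_def b_def trunc_normal_def)
  qed
  have part2: "AE s in M. real_cond_exp M F U s
              = (A (Y s) + std_normal_density (A (Y s)) / std_normal_cdf (A (Y s))) / \<eta>"
  proof -
    have "AE s in M. real_cond_exp M F (\<lambda>s. U s ^ 1) s = h 1 (Y s)" by (rule mom)
    moreover have "h 1 y = (A y + std_normal_density (A y) / std_normal_cdf (A y)) / \<eta>" for y
      unfolding hval a_def sb using h1_formula[OF eta_pos] by simp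
    ultimately show ?thesis by simp
  qed
  have part3: "\<forall>k::nat. k \<ge> 2 \<longrightarrow> (AE s in M.
            real_cond_exp M F (\<lambda>s. U s ^ k) s
              = A (Y s) / \<eta> * real_cond_exp M F (\<lambda>s. U s ^ (k - 1)) s
                + real (k - 1) / \<eta>\<^sup>2 * real_cond_exp M F (\<lambda>s. U s ^ (k - 2)) s)"
  proof (intro allI impI)
    fix k :: nat assume k: "2 \<le> k"
    have hk: "h k y = A y / \<eta> * h (k - 1) y + real (k - 1) / \<eta>\<^sup>2 * h (k - 2) y" for y
      unfolding hval using hk_formula[OF _ k, of "sqrt b" "a y"] eta_pos b_pos
      by (simp add: a_def b_def)
    show "AE s in M. real_cond_exp M F (\<lambda>s. U s ^ k) s
              = A (Y s) / \<eta> * real_cond_exp M F (\<lambda>s. U s ^ (k - 1)) s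
                + real (k - 1) / \<eta>\<^sup>2 * real_cond_exp M F (\<lambda>s. U s ^ (k - 2)) s"
      using mom[of k] mom[of "k - 1"] mom[of "k - 2"]
      by eventually_elim (simp add: hk)
  qed
  show ?thesis using part1 part2 part3 by blast
qed

end
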